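(* Fix $n,r,s\in\mathbb Z_{\ge0}$ with $r,s<n$, and $d_1,\dots,d_r\in\mathbb N$ with $\sum_{i=1}^rd_i=s$. Let $\mu$ be a distribution on $\mathbb Z_{\ge0}$, let $(X_i)_{i\ge1}$ be i.i.d. with law $\mu$, and let $N=|\{i\in\{r+1,\dots,n\}:X_i>0\}|$. Let $\vec Z=(Z_1,\dots,Z_n)=(d_1,\dots,d_r,X_{r+1},\dots,X_n)$ and, conditionally on $\vec Z$, let $\Sigma=\Sigma_{\vec Z}$ be its size-biased random re-ordering permutation. Let $(\overline X_i)_{i\in[n]}$ be i.i.d. with the size-biased law of $X_1$. Suppose $\mathbb E[X_1]<\infty$. Then for any $m\in[n-r]$ and any function $f:\mathbb N^m\to\mathbb R$, if $\mathbb P(X_{r+1}+\dots+X_n=n-1-s)>0$, then $$\mathbb E\Big[f(Z_{\Sigma(1)},\dots,Z_{\Sigma(m)})\mathbf 1\{N\ge m\}\mathbf 1\{\tau_r(\Sigma)>m\}\ \Big|\ X_{r+1}+\dots+X_n=n-1-s\Big]=\mathbb E\big[f(\overline X_1,\dots,\overline X_m)\,\Theta^{n,r,s}_\mu(\overline X_1,\dots,\overline X_m)\big].$$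
   Context: Size-biased random re-ordering: for $(k_1,\dots,k_n)\in\mathbb Z_{\ge0}^n$ with $N'$ positive entries, $\Sigma$ is the random permutation of $[n]$ such that $\Sigma(1),\dots,\Sigma(N')$ are the indices of the positive entries, with $\mathbb P(\Sigma=\sigma)=\frac1{(n-N')!}\prod_{i=1}^{N'}\frac{k_{\sigma(i)}}{\sum_{j=i}^{N'}k_{\sigma(j)}}$ for such $\sigma$ (i.e. the positive entries in size-biased order followed by the zero entries in uniform order). For $\sigma$ a permutation of $[n]$: $\tau_r(\sigma)=\min\{j\in[n]:\sigma(j)\in[r]\}$ if $r\in[n]$, and $\tau_0(\sigma)=n+1$. The size-biased law of $X_1$ is $\mathbb P(\overline X=k)=k\mu_k/\mathbb E[X_1]$. For $k_1,\dots,k_m\in\mathbb N$ with $k_1+\dots+k_m\le n-1-s$, $$\Theta^{n,r,s}_\mu(k_1,\dots,k_m)=\frac{\mathbb P\big(X_{m+1}+\dots+X_{n-r}=n-1-s-\sum_{i=1}^mk_i\big)}{\mathbb P\big(X_1+\dots+X_{n-r}=n-1-s\big)}\,(\mathbb E[X_1])^m\prod_{i=1}^m\frac{n-r-i+1}{n-1-\sum_{j=1}^{i-1}k_j},$$ and $\Theta^{n,r,s}_\mu(k_1,\dots,k_m)=0$ otherwise. *)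

theory Defs
  imports "HOL-Probability.Probability" "HOL-Combinatorics.Permutations"
begin

text \<open>Probability that Size-biased random re-ordering of (k 1, ..., k n) equals sigma.
  sigma ranges over permutations of {1..n}; the positive entries come first in
  size-biased order, followed by the zero entries in uniform order.\<close>
definition sb_prob :: "nat \<Rightarrow> (nat \<Rightarrow> nat) \<Rightarrow> (nat \<Rightarrow> nat) \<Rightarrow> real" where
  "sb_prob n k \<sigma> =
     (let P = {i \<in> {1..n}. 0 < k i}; N' = card P in
      if \<sigma> permutes {1..n} \<and> \<sigma> ` {1..N'} = P then
        (1 / fact (n - N')) *
        (\<Prod>i\<in>{1..N'}. real (k (\<sigma> i)) / real (\<Sum>j\<in>{i..N'}. k (\<sigma> j)))
      else 0)"

definition tau :: "nat \<Rightarrow> nat \<Rightarrow> (nat \<Rightarrow> nat) \<Rightarrow> nat" where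
  "tau n r \<sigma> = (if r = 0 then n + 1 else Min {j \<in> {1..n}. \<sigma> j \<in> {1..r}})"

definition Zvec :: "nat \<Rightarrow> (nat \<Rightarrow> nat) \<Rightarrow> (nat \<Rightarrow> nat) \<Rightarrow> nat \<Rightarrow> nat" where
  "Zvec r d x = (\<lambda>i. if i \<le> r then d i else x i)"

definition Npos :: "nat \<Rightarrow> nat \<Rightarrow> (nat \<Rightarrow> nat) \<Rightarrow> nat" where
  "Npos n r x = card {i \<in> {r+1..n}. 0 < x i}"

abbreviation iid_pmf :: "nat set \<Rightarrow> nat pmf \<Rightarrow> (nat \<Rightarrow> nat) pmf" where
  "iid_pmf I \<mu> \<equiv> Pi_pmf I 0 (\<lambda>_. \<mu>)"

definition psum :: "nat pmf \<Rightarrow> nat \<Rightarrow> nat \<Rightarrow> real" where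
  "psum \<mu> j t = measure_pmf.prob (iid_pmf {1..j} \<mu>) {x. (\<Sum>i\<in>{1..j}. x i) = t}"

definition mean :: "nat pmf \<Rightarrow> real" where
  "mean \<mu> = measure_pmf.expectation \<mu> real"

definition sb_weight :: "nat pmf \<Rightarrow> nat \<Rightarrow> real" where
  "sb_weight \<mu> k = real k * pmf \<mu> k / mean \<mu>"

definition Theta :: "nat pmf \<Rightarrow> nat \<Rightarrow> nat \<Rightarrow> nat \<Rightarrow> nat list \<Rightarrow> real" where
  "Theta \<mu> n r s ks =
     (let m = length ks in
      if (\<forall>k\<in>set ks. 1 \<le> k) \<and> sum_list ks \<le> n - 1 - s then
        psum \<mu> (n - r - m) (n - 1 - s - sum_list ks) / psum \<mu> (n - r) (n - 1 - s)
        * mean \<mu> ^ m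
        * (\<Prod>i\<in>{1..m}. (real n - real r - real i + 1)
                           / (real n - 1 - real (sum_list (take (i - 1) ks))))
      else 0)"

end

theory Submission
  imports Defs "HOL-Combinatorics.Multiset_Permutations"
begin

fun sbl :: "(nat \<Rightarrow> nat) \<Rightarrow> nat list \<Rightarrow> real" where
  "sbl w [] = 1"
| "sbl w (a # xs) = real (w a) / real (w a + sum_list (map w xs)) * sbl w xs"

definition Qi :: "real \<Rightarrow> nat list \<Rightarrow> real" where
  "Qi W ks = (\<Prod>i<length ks. real (ks ! i) / (W - real (sum_list (take i ks))))"

definition dl :: "nat \<Rightarrow> nat set \<Rightarrow> nat list set" where
  "dl m P = {xs. length xs = m \<and> distinct xs \<and> set xs \<subseteq> P}"

lemma Qi_Nil [simp]: "Qi W [] = 1" by (simp add: Qi_def)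

lemma Qi_Cons: "Qi W (a # ks) = real a / W * Qi (W - real a) ks"
  unfolding Qi_def by (simp del: prod.lessThan_Suc add: prod.lessThan_Suc_shift diff_diff_eq algebra_simps)

lemma finite_dl: "finite P \<Longrightarrow> finite (dl m P)"
  unfolding dl_def using finite_lists_length_eq[of P m] by (rule finite_subset[rotated]) auto

lemma dl_0 [simp]: "dl 0 P = {[]}" by (auto simp: dl_def)

lemma dl_Suc: "dl (Suc m) P = (\<Union>a\<in>P. (#) a ` dl m (P - {a}))"
proof (intro equalityI subsetI)
  fix xs assume "xs \<in> dl (Suc m) P"
  then obtain a ys where "xs = a # ys" "a \<in> P" "ys \<in> dl m (P - {a})"
    by (cases xs) (auto simp: dl_def)
  then show "xs \<in> (\<Union>a\<in>P. (#) a ` dl m (P - {a}))" by blast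
qed (auto simp: dl_def)

lemma sum_dl_Suc:
  assumes "finite P"
  shows "(\<Sum>xs\<in>dl (Suc m) P. F xs) = (\<Sum>a\<in>P. \<Sum>ys\<in>dl m (P - {a}). F (a # ys))"
proof -
  have "(\<Sum>xs\<in>dl (Suc m) P. F xs) = (\<Sum>a\<in>P. \<Sum>xs\<in>(#) a ` dl m (P - {a}). F xs)"
    unfolding dl_Suc using assms
    by (intro sum.UNION_disjoint) (auto intro: finite_dl)
  also have "\<dots> = (\<Sum>a\<in>P. \<Sum>ys\<in>dl m (P - {a}). F (a # ys))"
    by (rule sum.cong[OF refl]) (simp add: sum.reindex inj_on_def)
  finally show ?thesis .
qed

lemma sum_perms_split:
  assumes "finite P" "P \<noteq> {}"
  shows "(\<Sum>xs\<in>permutations_of_set P. F xs) =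
         (\<Sum>a\<in>P. \<Sum>ys\<in>permutations_of_set (P - {a}). F (a # ys))"
proof -
  have "(\<Sum>xs\<in>permutations_of_set P. F xs) =
        (\<Sum>a\<in>P. \<Sum>xs\<in>(#) a ` permutations_of_set (P - {a}). F xs)"
    unfolding permutations_of_set_nonempty[OF assms(2)] using assms
    by (intro sum.UNION_disjoint) auto
  also have "\<dots> = (\<Sum>a\<in>P. \<Sum>ys\<in>permutations_of_set (P - {a}). F (a # ys))"
    by (rule sum.cong[OF refl]) (simp add: sum.reindex inj_on_def)
  finally show ?thesis .
qed

lemma sbl_total:
  assumes "finite P" "\<forall>i\<in>P. 0 < w i"
  shows "(\<Sum>xs\<in>permutations_of_set P. sbl w xs) = 1"
  using assms
proof (induction "card P" arbitrary: P)
  case 0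
  then show ?case by simp
next
  case (Suc k)
  then have ne: "P \<noteq> {}" by auto
  have pos: "0 < sum w P" using Suc.prems ne by (simp add: sum_pos)
  have "(\<Sum>xs\<in>permutations_of_set P. sbl w xs) =
        (\<Sum>a\<in>P. \<Sum>ys\<in>permutations_of_set (P - {a}). sbl w (a # ys))"
    by (rule sum_perms_split[OF Suc.prems(1) ne])
  also have "\<dots> = (\<Sum>a\<in>P. real (w a) / real (sum w P) * (\<Sum>ys\<in>permutations_of_set (P - {a}). sbl w ys))"
  proof (intro sum.cong refl)
    fix a assume a: "a \<in> P"
    have "\<And>ys. ys \<in> permutations_of_set (P - {a}) \<Longrightarrow> w a + sum_list (map w ys) = sum w P"
      using a Suc.prems(1) by (auto simp: permutations_of_set_def sum_list_distinct_conv_sum_set sum.remove)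
    then show "(\<Sum>ys\<in>permutations_of_set (P - {a}). sbl w (a # ys)) =
          real (w a) / real (sum w P) * (\<Sum>ys\<in>permutations_of_set (P - {a}). sbl w ys)"
      by (simp add: sum_distrib_left)
  qed
  also have "\<dots> = (\<Sum>a\<in>P. real (w a) / real (sum w P))"
  proof (intro sum.cong refl)
    fix a assume a: "a \<in> P"
    have "card (P - {a}) = k" using Suc.hyps(2) a Suc.prems(1) by simp
    then have "(\<Sum>ys\<in>permutations_of_set (P - {a}). sbl w ys) = 1"
      using Suc.hyps(1)[of "P - {a}"] Suc.prems by auto
    then show "real (w a) / real (sum w P) * (\<Sum>ys\<in>permutations_of_set (P - {a}). sbl w ys) =
               real (w a) / real (sum w P)" by simp
  qed
  also have "\<dots> = 1"
  proof -
    have "0 < (\<Sum>a\<in>P. real (w a))" by (metis of_nat_0_less_iff of_nat_sum pos)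
    then show ?thesis by (simp add: sum_divide_distrib[symmetric])
  qed
  finally show ?case .
qed

lemma sbl_marg:
  assumes "finite P" "\<forall>i\<in>P. 0 < w i" "m \<le> card P"
  shows "(\<Sum>xs\<in>permutations_of_set P. sbl w xs * h (take m xs)) =
         (\<Sum>ys\<in>dl m P. Qi (real (sum w P)) (map w ys) * h ys)"
  using assms
proof (induction m arbitrary: P h)
  case 0
  then show ?case using sbl_total[OF 0(1,2)] by (simp add: sum_distrib_right[symmetric])
next
  case (Suc m)
  then have ne: "P \<noteq> {}" by auto
  have pos: "0 < sum w P" using Suc.prems ne by (simp add: sum_pos)
  have "(\<Sum>xs\<in>permutations_of_set P. sbl w xs * h (take (Suc m) xs)) =
        (\<Sum>a\<in>P. \<Sum>ys\<in>permutations_of_set (P - {a}). sbl w (a # ys) * h (take (Suc m) (a # ys)))"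
    by (rule sum_perms_split[OF Suc.prems(1) ne])
  also have "\<dots> = (\<Sum>a\<in>P. real (w a) / real (sum w P) *
       (\<Sum>ys\<in>permutations_of_set (P - {a}). sbl w ys * h (a # take m ys)))"
  proof (intro sum.cong refl)
    fix a assume a: "a \<in> P"
    have "\<And>ys. ys \<in> permutations_of_set (P - {a}) \<Longrightarrow> w a + sum_list (map w ys) = sum w P"
      using a Suc.prems(1) by (auto simp: permutations_of_set_def sum_list_distinct_conv_sum_set sum.remove)
    then show "(\<Sum>ys\<in>permutations_of_set (P - {a}). sbl w (a # ys) * h (take (Suc m) (a # ys))) =
          real (w a) / real (sum w P) * (\<Sum>ys\<in>permutations_of_set (P - {a}). sbl w ys * h (a # take m ys))"
      by (simp add: sum_distrib_left mult.assoc)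
  qed
  also have "\<dots> = (\<Sum>a\<in>P. real (w a) / real (sum w P) *
       (\<Sum>ys\<in>dl m (P - {a}). Qi (real (sum w (P - {a}))) (map w ys) * h (a # ys)))"
  proof (intro sum.cong refl)
    fix a assume a: "a \<in> P"
    have "m \<le> card (P - {a})" using Suc.prems a by simp
    then show "real (w a) / real (sum w P) *
       (\<Sum>ys\<in>permutations_of_set (P - {a}). sbl w ys * h (a # take m ys)) =
       real (w a) / real (sum w P) *
       (\<Sum>ys\<in>dl m (P - {a}). Qi (real (sum w (P - {a}))) (map w ys) * h (a # ys))"
      using Suc.IH[of "P - {a}" "\<lambda>ys. h (a # ys)"] Suc.prems by auto
  qed
  also have "\<dots> = (\<Sum>a\<in>P. \<Sum>ys\<in>dl m (P - {a}). Qi (real (sum w P)) (map w (a # ys)) * h (a # ys))"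
  proof (intro sum.cong refl)
    fix a assume a: "a \<in> P"
    have "real (sum w (P - {a})) = real (sum w P) - real (w a)"
      using a Suc.prems(1) by (simp add: sum.remove of_nat_diff)
    then show "real (w a) / real (sum w P) *
       (\<Sum>ys\<in>dl m (P - {a}). Qi (real (sum w (P - {a}))) (map w ys) * h (a # ys)) =
       (\<Sum>ys\<in>dl m (P - {a}). Qi (real (sum w P)) (map w (a # ys)) * h (a # ys))"
      by (simp add: Qi_Cons sum_distrib_left mult.assoc)
  qed
  also have "\<dots> = (\<Sum>ys\<in>dl (Suc m) P. Qi (real (sum w P)) (map w ys) * h ys)"
    by (rule sum_dl_Suc[OF Suc.prems(1), symmetric])
  finally show ?case .
qed

lemma sbl_map_upt:
  "sbl w (map \<sigma> [a..<b]) = (\<Prod>i\<in>{a..<b}. real (w (\<sigma> i)) / real (\<Sum>j\<in>{i..<b}. w (\<sigma> j)))"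
proof (induction "b - a" arbitrary: a)
  case 0
  then show ?case by simp
next
  case (Suc k)
  then have ab: "a < b" by simp
  have "sum_list (map w (map \<sigma> [Suc a..<b])) = (\<Sum>j\<in>{Suc a..<b}. w (\<sigma> j))"
    by (simp add: sum_list_distinct_conv_sum_set)
  moreover have "w (\<sigma> a) + (\<Sum>j\<in>{Suc a..<b}. w (\<sigma> j)) = (\<Sum>j\<in>{a..<b}. w (\<sigma> j))"
    using ab by (simp add: sum.atLeast_Suc_lessThan)
  ultimately show ?case using Suc ab
    by (simp add: upt_conv_Cons prod.atLeast_Suc_lessThan)
qed

lemma perm_list_bij:
  "bij_betw (\<lambda>\<sigma>. map \<sigma> [1..<n+1]) {\<sigma>. \<sigma> permutes {1..n}} (permutations_of_set {1..n})"
proof -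
  let ?f = "\<lambda>\<sigma>. map \<sigma> [1..<n+1]"
  have inj: "inj_on ?f {\<sigma>. \<sigma> permutes {1..n}}"
  proof (rule inj_onI)
    fix \<sigma> \<tau> assume s: "\<sigma> \<in> {\<sigma>. \<sigma> permutes {1..n}}" and t: "\<tau> \<in> {\<sigma>. \<sigma> permutes {1..n}}"
      and eq: "?f \<sigma> = ?f \<tau>"
    show "\<sigma> = \<tau>"
    proof
      fix i show "\<sigma> i = \<tau> i"
      proof (cases "i \<in> {1..n}")
        case True
        then show ?thesis using eq by (auto simp: map_eq_conv)
      next
        case False
        then show ?thesis using s t by (simp add: permutes_not_in)
      qed
    qed
  qed
  have sub: "?f ` {\<sigma>. \<sigma> permutes {1..n}} \<subseteq> permutations_of_set {1..n}"
  proof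
    fix L assume "L \<in> ?f ` {\<sigma>. \<sigma> permutes {1..n}}"
    then obtain \<sigma> where s: "\<sigma> permutes {1..n}" and L: "L = ?f \<sigma>" by auto
    have e: "set [1..<n+1] = {1..n}" by auto
    have "set L = \<sigma> ` set [1..<n+1]" unfolding L by (rule set_map)
    then have "set L = {1..n}" using permutes_image[OF s] e by simp
    moreover have "distinct L"
    proof -
      have "inj_on \<sigma> {1..n}" using permutes_inj_on[OF s] .
      then have "inj_on \<sigma> (set [1..<n+1])" using e by simp
      then show ?thesis unfolding L distinct_map by simp
    qed
    ultimately show "L \<in> permutations_of_set {1..n}" by (auto simp: permutations_of_set_def)
  qed
  have "card (?f ` {\<sigma>. \<sigma> permutes {1..n}}) = card (permutations_of_set {1..n})"
    using card_image[OF inj] card_permutations[of "{1..n}" n] by simp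
  then have "?f ` {\<sigma>. \<sigma> permutes {1..n}} = permutations_of_set {1..n}"
    using sub by (intro card_subset_eq) auto
  then show ?thesis using inj by (simp add: bij_betw_def)
qed

lemma split_perms:
  assumes "finite U" "P \<subseteq> U"
  shows "(\<Sum>L\<in>permutations_of_set U. if set (take (card P) L) = P then G (take (card P) L) else 0)
         = fact (card (U - P)) * (\<Sum>\<pi>\<in>permutations_of_set P. G \<pi>)"
proof -
  let ?k = "card P"
  have fP: "finite P" using assms finite_subset by blast
  have eqS: "{L\<in>permutations_of_set U. set (take ?k L) = P} =
        (\<lambda>(\<pi>,\<rho>). \<pi> @ \<rho>) ` (permutations_of_set P \<times> permutations_of_set (U - P))"
  proof (intro equalityI subsetI)
    fix L assume "L \<in> {L\<in>permutations_of_set U. set (take ?k L) = P}"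
    then have L: "set L = U" "distinct L" "set (take ?k L) = P" by (auto simp: permutations_of_set_def)
    have "take ?k L \<in> permutations_of_set P" using L by (auto simp: permutations_of_set_def)
    moreover have "drop ?k L \<in> permutations_of_set (U - P)"
    proof -
      have "set (drop ?k L) = U - P"
      proof -
        have d: "distinct (take ?k L @ drop ?k L)" using L by simp
        have u: "set (take ?k L) \<union> set (drop ?k L) = U" using L(1)
          by (metis append_take_drop_id set_append)
        show ?thesis using d u L(3) by (auto simp del: append_take_drop_id)
      qed
      then show ?thesis using L by (auto simp: permutations_of_set_def)
    qed
    ultimately show "L \<in> (\<lambda>(\<pi>,\<rho>). \<pi> @ \<rho>) ` (permutations_of_set P \<times> permutations_of_set (U - P))"
      by (intro image_eqI[where x="(take ?k L, drop ?k L)"]) auto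
  next
    fix L assume "L \<in> (\<lambda>(\<pi>,\<rho>). \<pi> @ \<rho>) ` (permutations_of_set P \<times> permutations_of_set (U - P))"
    then obtain \<pi> \<rho> where L: "L = \<pi> @ \<rho>" and p: "\<pi> \<in> permutations_of_set P"
      and r: "\<rho> \<in> permutations_of_set (U - P)" by auto
    have lp: "length \<pi> = ?k" using p by (simp add: length_finite_permutations_of_set)
    show "L \<in> {L\<in>permutations_of_set U. set (take ?k L) = P}"
      using p r assms(2) lp unfolding L by (auto simp: permutations_of_set_def)
  qed
  have inj: "inj_on (\<lambda>(\<pi>,\<rho>). \<pi> @ \<rho>) (permutations_of_set P \<times> permutations_of_set (U - P))"
  proof (rule inj_onI, clarify)
    fix a b c d assume "a \<in> permutations_of_set P" "c \<in> permutations_of_set P" "a @ b = c @ d"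
    then show "a = c \<and> b = d"
      by (metis append_eq_append_conv length_finite_permutations_of_set)
  qed
  have "(\<Sum>L\<in>permutations_of_set U. if set (take ?k L) = P then G (take ?k L) else 0)
        = (\<Sum>L\<in>{L\<in>permutations_of_set U. set (take ?k L) = P}. G (take ?k L))"
    by (simp add: sum.inter_filter)
  also have "\<dots> = (\<Sum>x\<in>permutations_of_set P \<times> permutations_of_set (U - P). G (take ?k (fst x @ snd x)))"
    unfolding eqS by (subst sum.reindex[OF inj]) (simp add: case_prod_unfold)
  also have "\<dots> = (\<Sum>x\<in>permutations_of_set P \<times> permutations_of_set (U - P). G (fst x))"
    by (intro sum.cong refl) (auto simp: length_finite_permutations_of_set)
  also have "\<dots> = (\<Sum>\<pi>\<in>permutations_of_set P. \<Sum>\<rho>\<in>permutations_of_set (U - P). G \<pi>)"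
    by (simp only: sum.cartesian_product case_prod_unfold)
  also have "\<dots> = fact (card (U - P)) * (\<Sum>\<pi>\<in>permutations_of_set P. G \<pi>)"
    using assms by (simp add: sum_distrib_left)
  finally show ?thesis .
qed

lemma SB:
  assumes P: "P = {i\<in>{1..n}. 0 < w i}" and m: "m \<le> card P"
  shows "(\<Sum>\<sigma> | \<sigma> permutes {1..n}. sb_prob n w \<sigma> * h (map \<sigma> [1..<m+1])) =
         (\<Sum>ys\<in>dl m P. Qi (real (sum w P)) (map w ys) * h ys)"
proof -
  define N where "N = card P"
  have PU: "P \<subseteq> {1..n}" using P by auto
  have Nn: "N \<le> n" unfolding N_def using card_mono[OF _ PU] by simp
  define F where "F L = (if set (take N L) = P
      then sbl w (take N L) * h (take m (take N L)) / fact (n - N) else 0)" for L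
  have step: "sb_prob n w \<sigma> * h (map \<sigma> [1..<m+1]) = F (map \<sigma> [1..<n+1])"
    if s: "\<sigma> permutes {1..n}" for \<sigma>
  proof -
    have tk: "take N (map \<sigma> [1..<n+1]) = map \<sigma> [1..<N+1]"
      using Nn by (simp add: take_map del: upt_Suc)
    have tk2: "take m (map \<sigma> [1..<N+1]) = map \<sigma> [1..<m+1]"
      using m by (simp add: take_map N_def del: upt_Suc)
    have st: "set (map \<sigma> [1..<N+1]) = \<sigma> ` {1..N}"
      by (simp only: set_map set_upt) (metis atLeastLessThanSuc_atLeastAtMost Suc_eq_plus1)
    have pr: "(\<Prod>i\<in>{1..N}. real (w (\<sigma> i)) / real (\<Sum>j\<in>{i..N}. w (\<sigma> j))) = sbl w (map \<sigma> [1..<N+1])"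
    proof -
      have "sbl w (map \<sigma> [1..<N+1]) = (\<Prod>i\<in>{1..<N+1}. real (w (\<sigma> i)) / real (\<Sum>j\<in>{i..<N+1}. w (\<sigma> j)))"
        by (rule sbl_map_upt)
      also have "\<dots> = (\<Prod>i\<in>{1..N}. real (w (\<sigma> i)) / real (\<Sum>j\<in>{i..N}. w (\<sigma> j)))"
        by (simp add: atLeastLessThanSuc_atLeastAtMost)
      finally show ?thesis by simp
    qed
    show ?thesis
      unfolding sb_prob_def Let_def F_def using s
      by (simp only: tk tk2 st pr P[symmetric] N_def[symmetric]) simp
  qed
  have "(\<Sum>\<sigma> | \<sigma> permutes {1..n}. sb_prob n w \<sigma> * h (map \<sigma> [1..<m+1])) =
        (\<Sum>\<sigma> | \<sigma> permutes {1..n}. F (map \<sigma> [1..<n+1]))"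
    by (rule sum.cong[OF refl], rule step) simp
  also have "\<dots> = (\<Sum>L\<in>permutations_of_set {1..n}. F L)"
    by (rule sum.reindex_bij_betw[OF perm_list_bij])
  also have "\<dots> = fact (card ({1..n} - P)) *
      (\<Sum>\<pi>\<in>permutations_of_set P. sbl w \<pi> * h (take m \<pi>) / fact (n - N))"
    unfolding F_def N_def by (rule split_perms[OF _ PU]) simp
  also have "\<dots> = (\<Sum>\<pi>\<in>permutations_of_set P. sbl w \<pi> * h (take m \<pi>))"
  proof -
    have "card ({1..n} - P) = n - N" using PU by (simp add: card_Diff_subset N_def finite_subset)
    then show ?thesis by (simp add: sum_divide_distrib[symmetric])
  qed
  also have "\<dots> = (\<Sum>ys\<in>dl m P. Qi (real (sum w P)) (map w ys) * h ys)"
    by (rule sbl_marg) (use P m in auto)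
  finally show ?thesis .
qed

primrec convpow :: "nat pmf \<Rightarrow> nat \<Rightarrow> nat pmf" where
  "convpow \<mu> 0 = return_pmf 0"
| "convpow \<mu> (Suc k) = map_pmf (\<lambda>(y,s). y + s) (pair_pmf \<mu> (convpow \<mu> k))"

lemma sum_law:
  fixes J :: "nat set"
  assumes "finite J"
  shows "map_pmf (\<lambda>x. \<Sum>i\<in>J. x i) (Pi_pmf J 0 (\<lambda>_. \<mu>)) = convpow \<mu> (card J)"
  using assms
proof (induction J rule: finite_induct)
  case empty
  then show ?case by simp
next
  case (insert a J)
  have eq: "(\<lambda>x. \<Sum>i\<in>insert a J. x i) \<circ> (\<lambda>(y::nat,f::nat\<Rightarrow>nat). f(a:=y)) = (\<lambda>(y,s). y + s) \<circ> apsnd (\<lambda>x. \<Sum>i\<in>J. x i)"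
  proof -
    have h: "sum (f(a:=y)) J = sum f J" for f :: "nat \<Rightarrow> nat" and y
      using insert.hyps by (intro sum.cong) auto
    show ?thesis using insert.hyps by (auto simp: fun_eq_iff h simp del: fun_upd_apply simp add: fun_upd_same)
  qed
  have "map_pmf (\<lambda>x. \<Sum>i\<in>insert a J. x i) (Pi_pmf (insert a J) 0 (\<lambda>_. \<mu>)) =
        map_pmf ((\<lambda>x. \<Sum>i\<in>insert a J. x i) \<circ> (\<lambda>(y,f). f(a:=y))) (pair_pmf \<mu> (Pi_pmf J 0 (\<lambda>_. \<mu>)))"
    using insert.hyps by (simp add: Pi_pmf_insert map_pmf_comp comp_def)
  also have "\<dots> = map_pmf ((\<lambda>(y,s). y + s) \<circ> apsnd (\<lambda>x. \<Sum>i\<in>J. x i)) (pair_pmf \<mu> (Pi_pmf J 0 (\<lambda>_. \<mu>)))"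
    by (simp only: eq)
  also have "\<dots> = map_pmf (\<lambda>(y,s). y + s) (pair_pmf \<mu> (map_pmf (\<lambda>x. \<Sum>i\<in>J. x i) (Pi_pmf J 0 (\<lambda>_. \<mu>))))"
    by (simp add: pair_map_pmf2 map_pmf_comp comp_def)
  also have "\<dots> = convpow \<mu> (card (insert a J))"
    using insert by simp
  finally show ?case .
qed

lemma psum_conv: "psum \<mu> j t = pmf (convpow \<mu> j) t"
proof -
  have "pmf (convpow \<mu> j) t = pmf (map_pmf (\<lambda>x. \<Sum>i\<in>{1..j}. x i) (Pi_pmf {1..j} 0 (\<lambda>_. \<mu>))) t"
    using sum_law[of "{1..j}" \<mu>] by simp
  also have "\<dots> = psum \<mu> j t"
    unfolding pmf_map psum_def by (simp add: vimage_def)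
  finally show ?thesis by simp
qed

lemma prob_sum_law:
  fixes J :: "nat set"
  assumes "finite J"
  shows "measure_pmf.prob (Pi_pmf J 0 (\<lambda>_. \<mu>)) {x. (\<Sum>i\<in>J. x i) = t} = pmf (convpow \<mu> (card J)) t"
proof -
  have "pmf (convpow \<mu> (card J)) t = pmf (map_pmf (\<lambda>x. \<Sum>i\<in>J. x i) (Pi_pmf J 0 (\<lambda>_. \<mu>))) t"
    using sum_law[OF assms, of \<mu>] by simp
  then show ?thesis unfolding pmf_map by (simp add: vimage_def)
qed

lemma list_law:
  fixes l :: "nat list" and \<mu> :: "nat pmf"
  assumes "distinct l" "length ks = length l"
  shows "pmf (map_pmf (\<lambda>x. map x l) (Pi_pmf (set l) 0 (\<lambda>_. \<mu>))) ks = (\<Prod>k\<leftarrow>ks. pmf \<mu> k)"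
  using assms
proof (induction l arbitrary: ks)
  case Nil
  then show ?case by simp
next
  case (Cons a l)
  obtain k ks' where ks: "ks = k # ks'" using Cons.prems by (cases ks) auto
  have h: "map (f(a:=y)) l = map f l" for f :: "nat \<Rightarrow> nat" and y
    using Cons.prems by (intro map_cong) auto
  have "map_pmf (\<lambda>x. map x (a # l)) (Pi_pmf (set (a # l)) 0 (\<lambda>_. \<mu>)) =
        map_pmf ((\<lambda>x. map x (a # l)) \<circ> (\<lambda>(y,f). f(a:=y))) (pair_pmf \<mu> (Pi_pmf (set l) 0 (\<lambda>_. \<mu>)))"
    using Cons.prems by (simp add: Pi_pmf_insert map_pmf_comp comp_def)
  also have "\<dots> = map_pmf ((\<lambda>(y,t). y # t) \<circ> apsnd (\<lambda>x. map x l)) (pair_pmf \<mu> (Pi_pmf (set l) 0 (\<lambda>_. \<mu>)))"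
    using Cons.prems by (intro map_pmf_cong refl) auto
  also have "\<dots> = map_pmf (\<lambda>(y,t). y # t) (pair_pmf \<mu> (map_pmf (\<lambda>x. map x l) (Pi_pmf (set l) 0 (\<lambda>_. \<mu>))))"
    by (simp add: pair_map_pmf2 map_pmf_comp comp_def)
  finally have e2: "map_pmf (\<lambda>x. map x (a # l)) (Pi_pmf (set (a # l)) 0 (\<lambda>_. \<mu>)) = \<dots>" .
  have inj: "inj (\<lambda>(y::nat,t::nat list). y # t)" by (auto simp: inj_def)
  have "pmf (map_pmf (\<lambda>(y,t). y # t) (pair_pmf \<mu> (map_pmf (\<lambda>x. map x l) (Pi_pmf (set l) 0 (\<lambda>_. \<mu>))))) (k # ks')
      = pmf (pair_pmf \<mu> (map_pmf (\<lambda>x. map x l) (Pi_pmf (set l) 0 (\<lambda>_. \<mu>)))) (k, ks')"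
    using pmf_map_inj'[OF inj, of "pair_pmf \<mu> (map_pmf (\<lambda>x. map x l) (Pi_pmf (set l) 0 (\<lambda>_. \<mu>)))" "(k, ks')"]
    by simp
  also have "\<dots> = pmf \<mu> k * pmf (map_pmf (\<lambda>x. map x l) (Pi_pmf (set l) 0 (\<lambda>_. \<mu>))) ks'"
    by (rule pmf_pair)
  finally have e3: "pmf (map_pmf (\<lambda>(y,t). y # t) (pair_pmf \<mu> (map_pmf (\<lambda>x. map x l) (Pi_pmf (set l) 0 (\<lambda>_. \<mu>))))) (k # ks')
      = pmf \<mu> k * pmf (map_pmf (\<lambda>x. map x l) (Pi_pmf (set l) 0 (\<lambda>_. \<mu>))) ks'" .
  have "length ks' = length l" using Cons.prems ks by simp
  then have "pmf (map_pmf (\<lambda>x. map x l) (Pi_pmf (set l) 0 (\<lambda>_. \<mu>))) ks' = (\<Prod>k\<leftarrow>ks'. pmf \<mu> k)"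
    using Cons.IH Cons.prems by simp
  then show ?case using e2 e3 ks by simp
qed

lemma prob_via_B:
  assumes "finite B" "set_pmf p \<inter> E \<subseteq> B"
  shows "measure_pmf.prob p E = sum (pmf p) (E \<inter> B)"
proof -
  have "measure_pmf.prob p E = measure_pmf.prob p (E \<inter> set_pmf p)"
    by (simp add: measure_Int_set_pmf)
  also have "E \<inter> set_pmf p = (E \<inter> B) \<inter> set_pmf p" using assms by auto
  also have "measure_pmf.prob p \<dots> = measure_pmf.prob p (E \<inter> B)"
    by (simp add: measure_Int_set_pmf)
  also have "\<dots> = sum (pmf p) (E \<inter> B)"
    using assms by (simp add: measure_measure_pmf_finite)
  finally show ?thesis .
qed

lemma joint:
  fixes l :: "nat list" and I :: "nat set"
  assumes fI: "finite I" and dl: "distinct l" and sl: "set l \<subseteq> I" and len: "length ks = length l"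
  shows "measure_pmf.prob (Pi_pmf I 0 (\<lambda>_. \<mu>)) {x. (\<Sum>i\<in>I. x i) = T \<and> map x l = ks} =
         (\<Prod>k\<leftarrow>ks. pmf \<mu> k) *
         (if sum_list ks \<le> T then pmf (convpow \<mu> (card I - length l)) (T - sum_list ks) else 0)"
proof -
  define R where "R = I - set l"
  have IU: "I = set l \<union> R" using sl R_def by auto
  have disj: "set l \<inter> R = {}" using R_def by auto
  have fR: "finite R" using fI R_def by auto
  define \<Phi> where "\<Phi> x = (map x l, \<Sum>i\<in>R. x i)" for x :: "nat \<Rightarrow> nat"
  define E' where "E' = {(a, b). sum_list a + b = T \<and> a = ks}"
  have sumI: "(\<Sum>i\<in>I. x i) = sum_list (map x l) + (\<Sum>i\<in>R. x i)" for x :: "nat \<Rightarrow> nat"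
    unfolding IU using fR disj dl by (simp add: sum.union_disjoint sum_list_distinct_conv_sum_set)
  have ev: "{x. (\<Sum>i\<in>I. x i) = T \<and> map x l = ks} = \<Phi> -` E'"
    unfolding \<Phi>_def E'_def by (auto simp: sumI)
  have merge: "\<Phi> \<circ> (\<lambda>(f,g) x. if x \<in> set l then f x else g x) =
        (\<lambda>(f, g). ((\<lambda>f. map f l) f, (\<lambda>g. \<Sum>i\<in>R. g i) g))"
  proof
    fix z :: "(nat \<Rightarrow> nat) \<times> (nat \<Rightarrow> nat)"
    obtain f g where z: "z = (f, g)" by (cases z)
    have "map (\<lambda>x. if x \<in> set l then f x else g x) l = map f l" by (intro map_cong) auto
    moreover have "(\<Sum>i\<in>R. if i \<in> set l then f i else g i) = (\<Sum>i\<in>R. g i)"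
      using disj by (intro sum.cong) auto
    ultimately show "(\<Phi> \<circ> (\<lambda>(f,g) x. if x \<in> set l then f x else g x)) z =
        (\<lambda>(f, g). ((\<lambda>f. map f l) f, (\<lambda>g. \<Sum>i\<in>R. g i) g)) z"
      by (simp add: z \<Phi>_def)
  qed
  have law: "map_pmf \<Phi> (Pi_pmf I 0 (\<lambda>_. \<mu>)) =
      pair_pmf (map_pmf (\<lambda>f. map f l) (Pi_pmf (set l) 0 (\<lambda>_. \<mu>))) (convpow \<mu> (card R))"
  proof -
    have "map_pmf \<Phi> (Pi_pmf I 0 (\<lambda>_. \<mu>)) =
        map_pmf (\<Phi> \<circ> (\<lambda>(f,g) x. if x \<in> set l then f x else g x))
          (pair_pmf (Pi_pmf (set l) 0 (\<lambda>_. \<mu>)) (Pi_pmf R 0 (\<lambda>_. \<mu>)))"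
      unfolding IU using fR disj by (simp add: Pi_pmf_union map_pmf_comp comp_def)
    also have "\<dots> = pair_pmf (map_pmf (\<lambda>f. map f l) (Pi_pmf (set l) 0 (\<lambda>_. \<mu>)))
                        (map_pmf (\<lambda>g. \<Sum>i\<in>R. g i) (Pi_pmf R 0 (\<lambda>_. \<mu>)))"
      unfolding merge by (rule map_pair)
    also have "\<dots> = pair_pmf (map_pmf (\<lambda>f. map f l) (Pi_pmf (set l) 0 (\<lambda>_. \<mu>))) (convpow \<mu> (card R))"
      using sum_law[OF fR] by simp
    finally show ?thesis .
  qed
  have E'eq: "E' = (if sum_list ks \<le> T then {(ks, T - sum_list ks)} else {})"
    unfolding E'_def by auto
  have cR: "card R = card I - length l"
    unfolding R_def using fI sl dl by (simp add: card_Diff_subset distinct_card)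
  have "measure_pmf.prob (Pi_pmf I 0 (\<lambda>_. \<mu>)) {x. (\<Sum>i\<in>I. x i) = T \<and> map x l = ks}
      = measure_pmf.prob (map_pmf \<Phi> (Pi_pmf I 0 (\<lambda>_. \<mu>))) E'"
    unfolding ev by (simp add: measure_map_pmf)
  also have "\<dots> = (\<Prod>k\<leftarrow>ks. pmf \<mu> k) *
         (if sum_list ks \<le> T then pmf (convpow \<mu> (card I - length l)) (T - sum_list ks) else 0)"
    unfolding law E'eq cR using list_law[OF dl len]
    by (simp add: measure_pmf_single pmf_pair)
  finally show ?thesis .
qed

lemma prod_list_nth: "prod_list (map g ks) = (\<Prod>i<length ks. g (ks ! i))"
  by (induction ks) (simp_all add: prod.lessThan_Suc_shift del: prod.lessThan_Suc)

lemma prod_upper: "m \<le> (N::nat) \<Longrightarrow> \<Prod>{N - m + 1..N} = (\<Prod>i<m. N - i)"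
proof (induction m)
  case 0
  then show ?case by simp
next
  case (Suc m)
  have "{N - Suc m + 1..N} = insert (N - m) {N - m + 1..N}"
    using Suc.prems by (auto simp: atLeastAtMost_insertL[symmetric] Suc_diff_Suc)
  then have "\<Prod>{N - Suc m + 1..N} = (N - m) * \<Prod>{N - m + 1..N}" by simp
  then show ?case using Suc by (simp add: mult.commute)
qed

lemma mean_zero:
  assumes "integrable (measure_pmf \<mu>) real" "mean \<mu> = 0" "0 < k"
  shows "pmf \<mu> k = 0"
proof -
  have "AE x in measure_pmf \<mu>. real x = 0"
    using assms(1,2) integral_nonneg_eq_0_iff_AE[of "measure_pmf \<mu>" real] unfolding mean_def by simp
  then have "\<forall>x\<in>set_pmf \<mu>. real x = 0" by (simp add: AE_measure_pmf_iff)
  then have "k \<notin> set_pmf \<mu>" using assms(3) by auto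
  then show ?thesis by (simp add: set_pmf_eq)
qed

lemma tau_iff:
  assumes s: "\<sigma> permutes {1..n}" and mn: "m \<le> n" and rn: "r < n"
  shows "(m < tau n r \<sigma>) = (set (map \<sigma> [1..<m+1]) \<subseteq> {r+1..n})"
proof (cases "r = 0")
  case True
  have "set (map \<sigma> [1..<m+1]) \<subseteq> {1..n}"
  proof
    fix y assume "y \<in> set (map \<sigma> [1..<m+1])"
    then obtain j where j0: "j \<in> set [1..<m+1]" and j2: "y = \<sigma> j" unfolding set_map by blast
    have j: "j \<in> {1..m}" "y = \<sigma> j" using j0 j2 by (auto simp del: upt_Suc)
    then have "j \<in> {1..n}" using mn by auto
    then show "y \<in> {1..n}" using j(2) permutes_in_image[OF s] by simp
  qed
  then show ?thesis using True mn by (simp add: tau_def)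
next
  case False
  define S where "S = {j\<in>{1..n}. \<sigma> j \<in> {1..r}}"
  have fS: "finite S" unfolding S_def by auto
  have "inv \<sigma> 1 \<in> S"
  proof -
    have "\<sigma> (inv \<sigma> 1) = 1" using permutes_inverses(1)[OF s] by simp
    moreover have "inv \<sigma> 1 \<in> {1..n}" using permutes_in_image[OF permutes_inv[OF s]] rn by auto
    ultimately show ?thesis unfolding S_def using False by auto
  qed
  then have neS: "S \<noteq> {}" by auto
  have "tau n r \<sigma> = Min S" unfolding tau_def S_def using False by simp
  then have "(m < tau n r \<sigma>) = (\<forall>j\<in>S. m < j)"
    using Min_gr_iff[OF fS neS] by simp
  also have "\<dots> = (\<forall>j\<in>{1..m}. \<sigma> j \<in> {r+1..n})"
  proof
    assume h: "\<forall>j\<in>S. m < j"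
    show "\<forall>j\<in>{1..m}. \<sigma> j \<in> {r+1..n}"
    proof
      fix j assume j: "j \<in> {1..m}"
      then have "j \<notin> S" using h by auto
      moreover have "\<sigma> j \<in> {1..n}" using j mn permutes_in_image[OF s] by auto
      ultimately show "\<sigma> j \<in> {r+1..n}" using j mn unfolding S_def by auto
    qed
  next
    assume h: "\<forall>j\<in>{1..m}. \<sigma> j \<in> {r+1..n}"
    show "\<forall>j\<in>S. m < j"
    proof
      fix j assume j: "j \<in> S"
      show "m < j"
      proof (rule ccontr)
        assume "\<not> m < j"
        then have "j \<in> {1..m}" using j unfolding S_def by auto
        then have "\<sigma> j \<in> {r+1..n}" using h by blast
        moreover have "\<sigma> j \<in> {1..r}" using j unfolding S_def by blast
        ultimately show False by simp
      qed
    qed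
  qed
  also have "\<dots> = (set (map \<sigma> [1..<m+1]) \<subseteq> {r+1..n})"
  proof -
    have "set (map \<sigma> [1..<m+1]) = \<sigma> ` {1..m}"
      by (simp del: upt_Suc add: atLeastLessThanSuc_atLeastAtMost)
    then show ?thesis by auto
  qed
  finally show ?thesis .
qed

lemma ar1: "a * ((b * ff) * (cc * pp)) / P = (a * b * cc) * ff * pp / P" for a b ff cc pp P :: real
  by (simp add: algebra_simps)

lemma ar2: "(S * M * Pr) * ff * pp / P = S * ff * (pp / P * M * Pr)" for S M Pr ff pp P :: real
  by (simp add: algebra_simps)

lemma termeq_lemma:
  fixes f :: "nat list \<Rightarrow> real"
  assumes rn: "r < n" and sn: "s < n"
    and integ: "integrable (measure_pmf \<mu>) real"
    and m1: "1 \<le> m" and mnr: "m \<le> n - r"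
    and len: "length ks = m"
    and PAc: "psum \<mu> (n - r) (n - 1 - s) = PA"
    and cDm: "card Dm = \<Prod>{(n - r) - m + 1..n - r}"
  shows "real (card Dm) *
     ((if \<forall>k\<in>set ks. 0 < k then Qi (real (n - 1)) ks * f ks else 0) *
      ((\<Prod>k\<leftarrow>ks. pmf \<mu> k) *
       (if sum_list ks \<le> n - 1 - s then pmf (convpow \<mu> (n - r - m)) (n - 1 - s - sum_list ks) else 0)))
     / PA = (\<Prod>k\<leftarrow>ks. sb_weight \<mu> k) * f ks * Theta \<mu> n r s ks"
proof (cases "\<forall>k\<in>set ks. 0 < k")
  case False
  have "\<not> ((\<forall>k\<in>set ks. 1 \<le> k) \<and> sum_list ks \<le> n - 1 - s)" using False by auto
  then have th0: "Theta \<mu> n r s ks = 0" unfolding Theta_def Let_def by (rule if_not_P)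
  have h0: "(if \<forall>k\<in>set ks. 0 < k then Qi (real (n - 1)) ks * f ks else 0) = 0"
    using False by (rule if_not_P)
  show ?thesis unfolding h0 th0 by (simp only: mult_zero_left mult_zero_right div_0)
next
  case allpos: True
  show ?thesis
  proof (cases "sum_list ks \<le> n - 1 - s")
    case False
    have "\<not> ((\<forall>k\<in>set ks. 1 \<le> k) \<and> sum_list ks \<le> n - 1 - s)" using False by simp
    then have th0: "Theta \<mu> n r s ks = 0" unfolding Theta_def Let_def by (rule if_not_P)
    have j0: "(if sum_list ks \<le> n - 1 - s then pmf (convpow \<mu> (n - r - m)) (n - 1 - s - sum_list ks) else 0) = 0"
      using False by (rule if_not_P)
    show ?thesis unfolding j0 th0 by (simp only: mult_zero_left mult_zero_right div_0)
  next
    case True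
    define ps where "ps = pmf (convpow \<mu> (n - r - m)) (n - 1 - s - sum_list ks)"
    define D where "D i = real (n - 1) - real (sum_list (take i ks))" for i
    define c where "c i = real (n - r) - real i" for i
    have prodeq: "(\<Prod>i\<in>{1..m}. (real n - real r - real i + 1)
                       / (real n - 1 - real (sum_list (take (i - 1) ks)))) = (\<Prod>i<m. c i / D i)"
    proof -
      have "(\<Prod>i\<in>{1..m}. (real n - real r - real i + 1)
                       / (real n - 1 - real (sum_list (take (i - 1) ks)))) =
            (\<Prod>i<m. (real n - real r - real (Suc i) + 1)
                       / (real n - 1 - real (sum_list (take (Suc i - 1) ks))))"
        by (rule prod.atLeast1_atMost_eq[unfolded One_nat_def[symmetric]])
      also have "\<dots> = (\<Prod>i<m. c i / D i)"
      proof (rule prod.cong[OF refl])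
        fix i assume "i \<in> {..<m}"
        have "c i = real n - real r - real (Suc i) + 1" unfolding c_def using rn by (simp add: of_nat_diff)
        moreover have "D i = real n - 1 - real (sum_list (take (Suc i - 1) ks))"
          unfolding D_def using rn by (simp add: of_nat_diff)
        ultimately show "(real n - real r - real (Suc i) + 1)
                       / (real n - 1 - real (sum_list (take (Suc i - 1) ks))) = c i / D i" by simp
      qed
      finally show ?thesis .
    qed
    have Theta_eq: "Theta \<mu> n r s ks = ps / PA * mean \<mu> ^ m * (\<Prod>i<m. c i / D i)"
    proof -
      have c1: "(\<forall>k\<in>set ks. 1 \<le> k) \<and> sum_list ks \<le> n - 1 - s"
        using allpos True by (auto simp: Suc_le_eq)
      have "Theta \<mu> n r s ks = psum \<mu> (n - r - m) (n - 1 - s - sum_list ks) / psum \<mu> (n - r) (n - 1 - s)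
        * mean \<mu> ^ m
        * (\<Prod>i\<in>{1..m}. (real n - real r - real i + 1)
                           / (real n - 1 - real (sum_list (take (i - 1) ks))))"
        unfolding Theta_def Let_def len using c1 by (rule if_P)
      then show ?thesis unfolding prodeq PAc unfolding psum_conv ps_def .
    qed
    have Jt_eq: "(\<Prod>k\<leftarrow>ks. pmf \<mu> k) = (\<Prod>i<m. pmf \<mu> (ks ! i))"
      using prod_list_nth[of "pmf \<mu>" ks] len by simp
    have H_eq: "Qi (real (n - 1)) ks = (\<Prod>i<m. real (ks ! i) / D i)"
      unfolding Qi_def D_def len ..
    have cD: "real (card Dm) = (\<Prod>i<m. c i)"
    proof -
      have "card Dm = (\<Prod>i<m. (n - r) - i)" using prod_upper[of m "n - r"] mnr cDm by simp
      then have "real (card Dm) = (\<Prod>i<m. real ((n - r) - i))" by simp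
      also have "\<dots> = (\<Prod>i<m. c i)"
        using mnr by (intro prod.cong refl) (simp add: c_def of_nat_diff)
      finally show ?thesis .
    qed
    have sbw: "(\<Prod>k\<leftarrow>ks. sb_weight \<mu> k) = (\<Prod>i<m. real (ks ! i) * pmf \<mu> (ks ! i) / mean \<mu>)"
    proof -
      have "(\<Prod>k\<leftarrow>ks. sb_weight \<mu> k) = (\<Prod>i<length ks. sb_weight \<mu> (ks ! i))" by (rule prod_list_nth)
      then show ?thesis unfolding len sb_weight_def .
    qed
    have core: "(\<Prod>i<m. c i) * (\<Prod>i<m. real (ks ! i) / D i) * (\<Prod>i<m. pmf \<mu> (ks ! i)) =
        (\<Prod>i<m. real (ks ! i) * pmf \<mu> (ks ! i) / mean \<mu>) * mean \<mu> ^ m * (\<Prod>i<m. c i / D i)"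
    proof (cases "mean \<mu> = 0")
      case True
      have "ks ! 0 \<in> set ks" using len m1 by auto
      then have "pmf \<mu> (ks ! 0) = 0" using mean_zero[OF integ True] allpos by auto
      then have "(\<Prod>i<m. pmf \<mu> (ks ! i)) = 0" using m1 by (intro prod_zero) auto
      moreover have "mean \<mu> ^ m = 0" using True m1 by simp
      ultimately show ?thesis by (simp only: mult_zero_left mult_zero_right)
    next
      case False
      have "(\<Prod>i<m. c i) * (\<Prod>i<m. real (ks ! i) / D i) * (\<Prod>i<m. pmf \<mu> (ks ! i)) =
            (\<Prod>i<m. c i * (real (ks ! i) / D i) * pmf \<mu> (ks ! i))"
        by (simp only: prod.distrib)
      also have "\<dots> = (\<Prod>i<m. (real (ks ! i) * pmf \<mu> (ks ! i) / mean \<mu>) * mean \<mu> * (c i / D i))"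
      proof (rule prod.cong[OF refl])
        fix i
        have "real (ks ! i) * pmf \<mu> (ks ! i) / mean \<mu> * mean \<mu> = real (ks ! i) * pmf \<mu> (ks ! i)"
          using False by simp
        then show "c i * (real (ks ! i) / D i) * pmf \<mu> (ks ! i) =
              (real (ks ! i) * pmf \<mu> (ks ! i) / mean \<mu>) * mean \<mu> * (c i / D i)"
          by (simp add: divide_simps)
      qed
      also have "\<dots> = (\<Prod>i<m. real (ks ! i) * pmf \<mu> (ks ! i) / mean \<mu>) * (\<Prod>i<m. mean \<mu>) * (\<Prod>i<m. c i / D i)"
        by (simp only: prod.distrib)
      also have "(\<Prod>i<m. mean \<mu>) = mean \<mu> ^ m" by simp
      finally show ?thesis .
    qed
    have h1: "(if \<forall>k\<in>set ks. 0 < k then Qi (real (n - 1)) ks * f ks else 0) = Qi (real (n - 1)) ks * f ks"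
      using allpos by (rule if_P)
    have j1: "(if sum_list ks \<le> n - 1 - s then pmf (convpow \<mu> (n - r - m)) (n - 1 - s - sum_list ks) else 0) = ps"
      using True unfolding ps_def by (rule if_P)
    have "real (card Dm) *
     ((if \<forall>k\<in>set ks. 0 < k then Qi (real (n - 1)) ks * f ks else 0) *
      ((\<Prod>k\<leftarrow>ks. pmf \<mu> k) *
       (if sum_list ks \<le> n - 1 - s then pmf (convpow \<mu> (n - r - m)) (n - 1 - s - sum_list ks) else 0)))
     / PA = ((\<Prod>i<m. c i) * (\<Prod>i<m. real (ks ! i) / D i) * (\<Prod>i<m. pmf \<mu> (ks ! i))) * f ks * ps / PA"
      unfolding h1 j1 unfolding cD H_eq Jt_eq by (rule ar1)
    also have "\<dots> = ((\<Prod>i<m. real (ks ! i) * pmf \<mu> (ks ! i) / mean \<mu>) * mean \<mu> ^ m * (\<Prod>i<m. c i / D i)) * f ks * ps / PA"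
      unfolding core ..
    also have "\<dots> = (\<Prod>k\<leftarrow>ks. sb_weight \<mu> k) * f ks * Theta \<mu> n r s ks"
      unfolding Theta_eq sbw by (rule ar2)
    finally show ?thesis .
  qed
qed

theorem propositionA4:
  fixes n r s m :: nat
    and d :: "nat \<Rightarrow> nat"
    and \<mu> :: "nat pmf"
    and f :: "nat list \<Rightarrow> real"
  assumes "r < n" and "s < n"
    and "\<forall>i\<in>{1..r}. 1 \<le> d i"
    and "(\<Sum>i\<in>{1..r}. d i) = s"
    and "integrable (measure_pmf \<mu>) real"
    and "1 \<le> m" and "m \<le> n - r"
    and pos: "measure_pmf.prob (iid_pmf {r+1..n} \<mu>) {x. (\<Sum>i\<in>{r+1..n}. x i) = n - 1 - s} > 0"
  shows "measure_pmf.expectation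
           (cond_pmf (iid_pmf {r+1..n} \<mu>) {x. (\<Sum>i\<in>{r+1..n}. x i) = n - 1 - s})
           (\<lambda>x. \<Sum>\<sigma> | \<sigma> permutes {1..n}.
                  sb_prob n (Zvec r d x) \<sigma>
                  * f (map (\<lambda>i. Zvec r d x (\<sigma> i)) [1..<m+1])
                  * (if m \<le> Npos n r x then 1 else 0)
                  * (if m < tau n r \<sigma> then 1 else 0))
       = infsum (\<lambda>ks. (\<Prod>k\<leftarrow>ks. sb_weight \<mu> k) * f ks * Theta \<mu> n r s ks)
                {ks. length ks = m}"
proof -
  note rn = assms(1) and sn = assms(2) and dpos = assms(3) and dsum = assms(4)
    and integ = assms(5) and m1 = assms(6) and mnr = assms(7)
  define I where "I = {r+1..n}"
  define T where "T = n - 1 - s"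
  define p where "p = iid_pmf I \<mu>"
  define A where "A = {x::nat\<Rightarrow>nat. (\<Sum>i\<in>I. x i) = T}"
  define PA where "PA = measure_pmf.prob p A"
  define G where "G x = (\<Sum>\<sigma> | \<sigma> permutes {1..n}.
                  sb_prob n (Zvec r d x) \<sigma>
                  * f (map (\<lambda>i. Zvec r d x (\<sigma> i)) [1..<m+1])
                  * (if m \<le> Npos n r x then 1 else 0)
                  * (if m < tau n r \<sigma> then 1 else 0))" for x
  define B where "B = PiE_dflt I 0 (\<lambda>_. {..T}) \<inter> A"
  define Dm where "Dm = dl m I"
  define K where "K = {ks::nat list. length ks = m \<and> set ks \<subseteq> {..T}}"
  define H where "H ks = (if \<forall>k\<in>set ks. 0 < k then Qi (real (n - 1)) ks * f ks else 0)" for ks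
  define Jt where "Jt ks = (\<Prod>k\<leftarrow>ks. pmf \<mu> k) *
     (if sum_list ks \<le> T then pmf (convpow \<mu> (n - r - m)) (T - sum_list ks) else 0)" for ks
  define F where "F ks = (\<Prod>k\<leftarrow>ks. sb_weight \<mu> k) * f ks * Theta \<mu> n r s ks" for ks

  have PApos: "PA > 0" using pos unfolding PA_def p_def A_def I_def T_def .
  have fI: "finite I" unfolding I_def by simp
  have cI: "card I = n - r" unfolding I_def by simp
  have fB: "finite B" unfolding B_def by (intro finite_Int disjI1 finite_PiE_dflt fI) auto
  have fK: "finite K" unfolding K_def using finite_lists_length_eq[of "{..T}" m] by (simp add: conj_commute)
  have fDm: "finite Dm" unfolding Dm_def using fI by (rule finite_dl)
  have setp: "set_pmf p \<inter> A \<subseteq> B"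
  proof
    fix x assume x: "x \<in> set_pmf p \<inter> A"
    have "x \<in> set_pmf p" using x by simp
    then have "x \<in> {f. \<forall>i. i \<notin> I \<longrightarrow> f i = 0}"
      using set_Pi_pmf_subset[OF fI, of 0 "\<lambda>_. \<mu>"] unfolding p_def by (rule subsetD[rotated])
    then have x0: "\<forall>i. i \<notin> I \<longrightarrow> x i = 0" by simp
    have "\<forall>i\<in>I. x i \<le> T"
    proof
      fix i assume i: "i \<in> I"
      have "sum x I = x i + sum x (I - {i})" by (rule sum.remove[OF fI i])
      then show "x i \<le> T" using x unfolding A_def by simp
    qed
    then show "x \<in> B" using x x0 unfolding B_def PiE_dflt_def by simp
  qed
  have BA: "B \<subseteq> A" unfolding B_def by auto

  have ne: "set_pmf p \<inter> A \<noteq> {}"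
  proof
    assume "set_pmf p \<inter> A = {}"
    then have "PA = measure_pmf.prob p (A \<inter> set_pmf p)" unfolding PA_def by (simp add: measure_Int_set_pmf)
    also have "\<dots> = 0" using \<open>set_pmf p \<inter> A = {}\<close> by (simp add: Int_commute)
    finally show False using PApos by simp
  qed
  have LHS: "measure_pmf.expectation (cond_pmf p A) G = (\<Sum>x\<in>B. G x * pmf p x) / PA"
  proof -
    have "measure_pmf.expectation (cond_pmf p A) G = (\<Sum>x\<in>B. G x * pmf (cond_pmf p A) x)"
      by (rule integral_measure_pmf_real[OF fB]) (use setp set_cond_pmf[OF ne] in auto)
    also have "\<dots> = (\<Sum>x\<in>B. G x * pmf p x / PA)"
      by (intro sum.cong refl) (use BA in \<open>auto simp: pmf_cond[OF ne] PA_def\<close>)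
    finally show ?thesis by (simp add: sum_divide_distrib)
  qed
  have L2: "G x = (\<Sum>l\<in>Dm. H (map x l))" if xB: "x \<in> B" for x
  proof -
    define Z where "Z = Zvec r d x"
    define P where "P = {i\<in>{1..n}. 0 < Z i}"
    define Q where "Q = {i\<in>I. 0 < x i}"
    define h where "h l = f (map Z l) * (if m \<le> Npos n r x then 1 else 0) * (if set l \<subseteq> I then 1 else 0)" for l
    have xA: "(\<Sum>i\<in>I. x i) = T" using xB BA unfolding A_def by auto
    have ZI: "Z i = x i" if "i \<in> I" for i using that unfolding Z_def Zvec_def I_def by auto
    have QP: "Q = P \<inter> I" unfolding Q_def P_def I_def using ZI unfolding I_def by auto
    have NQ: "Npos n r x = card Q" unfolding Npos_def Q_def I_def ..
    have mn: "m \<le> n" using mnr by simp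
    have G1: "G x = (\<Sum>\<sigma> | \<sigma> permutes {1..n}. sb_prob n Z \<sigma> * h (map \<sigma> [1..<m+1]))"
      unfolding G_def
    proof (rule sum.cong[OF refl])
      fix \<sigma> assume "\<sigma> \<in> {\<sigma>. \<sigma> permutes {1..n}}"
      then have s: "\<sigma> permutes {1..n}" by simp
      show "sb_prob n (Zvec r d x) \<sigma> * f (map (\<lambda>i. Zvec r d x (\<sigma> i)) [1..<m+1]) *
              (if m \<le> Npos n r x then 1 else 0) * (if m < tau n r \<sigma> then 1 else 0) =
            sb_prob n Z \<sigma> * h (map \<sigma> [1..<m+1])"
        unfolding h_def Z_def using tau_iff[OF s mn rn] unfolding I_def
        by (simp del: upt_Suc add: mult.assoc comp_def)
    qed
    show ?thesis
    proof (cases "m \<le> Npos n r x")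
      case False
      have "G x = 0" unfolding G1 h_def using False by (intro sum.neutral ballI) simp
      moreover have "H (map x l) = 0" if lD: "l \<in> Dm" for l
      proof -
        have l: "length l = m" "distinct l" "set l \<subseteq> I" using lD unfolding Dm_def dl_def by auto
        have "\<not> (\<forall>i\<in>set l. 0 < x i)"
        proof
          assume "\<forall>i\<in>set l. 0 < x i"
          then have "set l \<subseteq> Q" using l unfolding Q_def by auto
          then have "card (set l) \<le> card Q" using fI unfolding Q_def by (intro card_mono) auto
          then show False using False l NQ by (simp add: distinct_card)
        qed
        then show ?thesis unfolding H_def by auto
      qed
      ultimately show ?thesis by simp
    next
      case True
      have PU: "P \<subseteq> {1..n}" unfolding P_def by auto
      have mP: "m \<le> card P"
      proof -
        have "Q \<subseteq> P" using QP by auto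
        then have "card Q \<le> card P" using PU by (intro card_mono) (auto intro: finite_subset)
        then show ?thesis using True NQ by simp
      qed
      have sumP: "sum Z P = n - 1"
      proof -
        have "sum Z P = sum Z {1..n}"
          by (rule sum.mono_neutral_left) (use PU in \<open>auto simp: P_def\<close>)
        also have "{1..n} = {1..r} \<union> I" unfolding I_def using rn by auto
        also have "sum Z ({1..r} \<union> I) = sum Z {1..r} + sum Z I"
          by (rule sum.union_disjoint) (auto simp: I_def)
        also have "sum Z {1..r} = s" using dsum unfolding Z_def Zvec_def by simp
        also have "sum Z I = T" using xA ZI by simp
        finally show ?thesis unfolding T_def using sn by simp
      qed
      have "G x = (\<Sum>l\<in>dl m P. Qi (real (sum Z P)) (map Z l) * h l)"
        unfolding G1 by (rule SB[OF P_def mP])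
      also have "\<dots> = (\<Sum>l\<in>{l\<in>Dm. \<forall>i\<in>set l. 0 < x i}. Qi (real (n - 1)) (map x l) * f (map x l))"
      proof (rule sum.mono_neutral_cong_right)
        show "finite (dl m P)" using PU by (intro finite_dl) (auto intro: finite_subset)
        show "{l\<in>Dm. \<forall>i\<in>set l. 0 < x i} \<subseteq> dl m P"
          using QP unfolding Dm_def dl_def Q_def by auto
        show "\<forall>l\<in>dl m P - {l\<in>Dm. \<forall>i\<in>set l. 0 < x i}. Qi (real (sum Z P)) (map Z l) * h l = 0"
        proof
          fix l assume l: "l \<in> dl m P - {l\<in>Dm. \<forall>i\<in>set l. 0 < x i}"
          have "\<not> set l \<subseteq> I"
          proof
            assume "set l \<subseteq> I"
            then have "l \<in> {l\<in>Dm. \<forall>i\<in>set l. 0 < x i}"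
              using l QP unfolding Dm_def dl_def Q_def by auto
            then show False using l by auto
          qed
          then show "Qi (real (sum Z P)) (map Z l) * h l = 0" unfolding h_def by simp
        qed
        fix l assume l: "l \<in> {l\<in>Dm. \<forall>i\<in>set l. 0 < x i}"
        then have sl: "set l \<subseteq> I" unfolding Dm_def dl_def by auto
        have mZ: "map Z l = map x l" using sl ZI by auto
        show "Qi (real (sum Z P)) (map Z l) * h l = Qi (real (n - 1)) (map x l) * f (map x l)"
          unfolding h_def mZ using sl True sumP by simp
      qed
      also have "\<dots> = (\<Sum>l\<in>Dm. H (map x l))"
      proof (rule sum.mono_neutral_cong_left)
        show "finite Dm" by (rule fDm)
        show "{l\<in>Dm. \<forall>i\<in>set l. 0 < x i} \<subseteq> Dm" by auto
        show "\<forall>l\<in>Dm - {l\<in>Dm. \<forall>i\<in>set l. 0 < x i}. H (map x l) = 0"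
          unfolding H_def by auto
        fix l assume l: "l \<in> {l\<in>Dm. \<forall>i\<in>set l. 0 < x i}"
        then show "Qi (real (n - 1)) (map x l) * f (map x l) = H (map x l)"
          unfolding H_def by auto
      qed
      finally show ?thesis .
    qed
  qed
  have L4: "(\<Sum>x\<in>B. pmf p x * H (map x l)) = (\<Sum>ks\<in>K. H ks * Jt ks)" if lD: "l \<in> Dm" for l
  proof -
    have l: "length l = m" "distinct l" "set l \<subseteq> I" using lD unfolding Dm_def dl_def by auto
    have img: "(\<lambda>x. map x l) ` B \<subseteq> K"
    proof
      fix y assume "y \<in> (\<lambda>x. map x l) ` B"
      then obtain x where x: "x \<in> B" "y = map x l" by auto
      have "\<forall>i\<in>I. x i \<le> T" using x(1) unfolding B_def PiE_dflt_def by auto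
      then show "y \<in> K" using x l unfolding K_def by auto
    qed
    have "(\<Sum>x\<in>B. pmf p x * H (map x l)) =
          (\<Sum>ks\<in>K. \<Sum>x\<in>{x\<in>B. map x l = ks}. pmf p x * H (map x l))"
      by (rule sum.group[OF fB fK img, symmetric])
    also have "\<dots> = (\<Sum>ks\<in>K. H ks * (\<Sum>x\<in>{x\<in>B. map x l = ks}. pmf p x))"
      by (intro sum.cong refl) (auto simp: sum_distrib_left mult.commute)
    also have "\<dots> = (\<Sum>ks\<in>K. H ks * Jt ks)"
    proof (intro sum.cong refl)
      fix ks assume ks: "ks \<in> K"
      define E where "E = {x::nat\<Rightarrow>nat. (\<Sum>i\<in>I. x i) = T \<and> map x l = ks}"
      have EB: "E \<inter> B = {x\<in>B. map x l = ks}" using BA unfolding E_def A_def by auto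
      have "set_pmf p \<inter> E \<subseteq> B" using setp unfolding E_def A_def by auto
      then have "measure_pmf.prob p E = (\<Sum>x\<in>{x\<in>B. map x l = ks}. pmf p x)"
        using prob_via_B[OF fB] EB by simp
      moreover have "measure_pmf.prob p E = Jt ks"
        unfolding p_def E_def Jt_def
        by (subst joint[OF fI l(2) l(3)]) (use ks l cI in \<open>auto simp: K_def\<close>)
      ultimately show "H ks * (\<Sum>x\<in>{x\<in>B. map x l = ks}. pmf p x) = H ks * Jt ks" by simp
    qed
    finally show ?thesis .
  qed
  have main: "(\<Sum>x\<in>B. G x * pmf p x) = real (card Dm) * (\<Sum>ks\<in>K. H ks * Jt ks)"
  proof -
    have "(\<Sum>x\<in>B. G x * pmf p x) = (\<Sum>x\<in>B. \<Sum>l\<in>Dm. pmf p x * H (map x l))"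
      by (intro sum.cong refl) (simp add: L2 sum_distrib_left mult.commute)
    also have "\<dots> = (\<Sum>l\<in>Dm. \<Sum>x\<in>B. pmf p x * H (map x l))"
      by (rule sum.swap)
    also have "\<dots> = (\<Sum>l\<in>Dm. \<Sum>ks\<in>K. H ks * Jt ks)"
      by (intro sum.cong refl) (simp add: L4)
    also have "\<dots> = real (card Dm) * (\<Sum>ks\<in>K. H ks * Jt ks)"
      by simp
    finally show ?thesis .
  qed
  have RHS: "infsum F {ks. length ks = m} = (\<Sum>ks\<in>K. F ks)"
  proof -
    have "infsum F {ks. length ks = m} = infsum F K"
    proof (rule infsum_cong_neutral)
      fix ks assume ks: "ks \<in> {ks. length ks = m} - K"
      then have "\<not> set ks \<subseteq> {..T}" unfolding K_def by auto
      then obtain k where k0: "k \<in> set ks" "\<not> k \<le> T" by auto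
      then have k: "k \<in> set ks" "T < k" by auto
      have "k \<le> sum_list ks" using k(1) by (simp add: member_le_sum_list)
      then have "\<not> sum_list ks \<le> n - 1 - s" using k unfolding T_def by linarith
      then show "F ks = 0" unfolding F_def Theta_def by (simp add: Let_def)
    qed (auto simp: K_def)
    also have "\<dots> = (\<Sum>ks\<in>K. F ks)" using fK by simp
    finally show ?thesis .
  qed
  have termeq: "real (card Dm) * (H ks * Jt ks) / PA = F ks" if kK: "ks \<in> K" for ks
  proof -
    have len: "length ks = m" using kK unfolding K_def by simp
    have PAc: "psum \<mu> (n - r) (n - 1 - s) = PA"
      unfolding PA_def p_def A_def psum_conv using prob_sum_law[OF fI, of \<mu> T] cI T_def by simp
    have cDm: "card Dm = \<Prod>{(n - r) - m + 1..n - r}"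
      unfolding Dm_def dl_def using card_lists_distinct_length_eq[OF fI, of m] mnr cI by simp
    show ?thesis unfolding H_def Jt_def F_def T_def
      using termeq_lemma[OF rn sn integ m1 mnr len PAc cDm, of f] .
  qed
  have "measure_pmf.expectation (cond_pmf p A) G = infsum F {ks. length ks = m}"
    unfolding LHS main RHS
    by (simp add: sum_divide_distrib sum_distrib_left termeq[symmetric] mult.assoc)
  then show ?thesis
    unfolding p_def A_def I_def T_def G_def F_def .
qed

end
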